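(* Let $N\ge 2$, $\lambda\neq 0$, and for $x,p\in\mathbb{C}^N$ set $$L_k(x,p;\lambda)=\begin{pmatrix}1+\lambda p_k & -\lambda^2e^{x_k}\\ e^{-x_k} & 0\end{pmatrix},\qquad T_N(x,p;\lambda)=L_N(x,p;\lambda)\cdots L_2(x,p;\lambda)L_1(x,p;\lambda).$$ (a) Periodic case: if $\widetilde{x}\in\mathbb{C}^N$ satisfies $p_k=\frac{1}{\lambda}\big(e^{\widetilde{x}_k-x_k}-1\big)+\lambda e^{x_k-\widetilde{x}_{k-1}}$ for $k=1,\dots,N$ with $\widetilde x_0=\widetilde x_N$, then $\prod_{k=1}^Ne^{\widetilde{x}_k-x_k}$ is an eigenvalue of $T_N(x,p;\lambda)$. (b) Open-end case: if $\widetilde{x}\in\mathbb{C}^N$ satisfies $p_1=\frac{1}{\lambda}\big(e^{\widetilde{x}_1-x_1}-1\big)$ and $p_k=\frac{1}{\lambda}\big(e^{\widetilde{x}_k-x_k}-1\big)+\lambda e^{x_k-\widetilde{x}_{k-1}}$ for $k=2,\dots,N$, then $\prod_{k=1}^Ne^{\widetilde{x}_k-x_k}$ equals the $(1,1)$-entry of $T_N(x,p;\lambda)$.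
   Context: The relation between $(x,p)$ and $\widetilde x$ is the first half of the Bäcklund transformation $F_\lambda$ of the Toda lattice $\ddot x_k=e^{x_{k+1}-x_k}-e^{x_k-x_{k-1}}$ (periodic, resp. open-end boundary conditions). *)

theory Defs
  imports "Jordan_Normal_Form.Char_Poly"
begin

text \<open>Lax matrix L_k(x,p;lambda) of the Toda lattice (2x2, indices 0,1 stand for 1,2).
  Vectors x, p in C^N are represented as functions nat => complex, used at indices 1..N.\<close>
definition toda_L :: "(nat \<Rightarrow> complex) \<Rightarrow> (nat \<Rightarrow> complex) \<Rightarrow> complex \<Rightarrow> nat \<Rightarrow> complex mat" where
  "toda_L x p lam k = mat_of_rows_list 2
     [[1 + lam * p k, - (lam\<^sup>2) * exp (x k)],
      [exp (- x k), 0]]"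

fun toda_T :: "(nat \<Rightarrow> complex) \<Rightarrow> (nat \<Rightarrow> complex) \<Rightarrow> complex \<Rightarrow> nat \<Rightarrow> complex mat" where
  "toda_T x p lam 0 = 1\<^sub>m 2"
| "toda_T x p lam (Suc n) = toda_L x p lam (Suc n) * toda_T x p lam n"

end

theory Submission
  imports Defs
begin

lemma toda_L_carrier: "toda_L x p lam k \<in> carrier_mat 2 2"
  by (simp add: toda_L_def mat_of_rows_list_def numeral_2_eq_2)

lemma toda_T_carrier: "toda_T x p lam n \<in> carrier_mat 2 2"
  by (induction n) (auto intro!: mult_carrier_mat[OF toda_L_carrier])

lemma toda_L_mult:
  "toda_L x p lam k *\<^sub>v vec 2 f = vec 2 (\<lambda>i. if i = 0 then (1 + lam * p k) * f 0 - lam\<^sup>2 * exp (x k) * f 1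
       else exp (- x k) * f 0)"
  by (rule eq_vecI) (auto simp: toda_L_def mat_of_rows_list_def mult_mat_vec_def scalar_prod_def
        row_def numeral_2_eq_2 less_Suc_eq)

lemma toda_T_chain:
  fixes V :: "nat \<Rightarrow> complex vec"
  assumes w: "w \<in> carrier_vec 2" and V: "\<And>k. V k \<in> carrier_vec 2"
    and s1: "toda_L x p lam 1 *\<^sub>v w = mu 1 \<cdot>\<^sub>v V 1"
    and sk: "\<And>k. 2 \<le> k \<Longrightarrow> k \<le> n \<Longrightarrow> toda_L x p lam k *\<^sub>v V (k - 1) = mu k \<cdot>\<^sub>v V k"
  shows "1 \<le> n \<Longrightarrow> toda_T x p lam n *\<^sub>v w = (\<Prod>k=1..n. mu k) \<cdot>\<^sub>v V n"
  using sk
proof (induction n)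
  case 0 then show ?case by simp
next
  case (Suc n)
  show ?case
  proof (cases "n = 0")
    case True
    then show ?thesis using s1 w toda_L_carrier[of x p lam 1] by simp
  next
    case False
    have IH: "toda_T x p lam n *\<^sub>v w = (\<Prod>k=1..n. mu k) \<cdot>\<^sub>v V n"
      using Suc False by auto
    have "toda_T x p lam (Suc n) *\<^sub>v w = toda_L x p lam (Suc n) *\<^sub>v (toda_T x p lam n *\<^sub>v w)"
      using assoc_mult_mat_vec[OF toda_L_carrier toda_T_carrier w] by simp
    also have "\<dots> = (\<Prod>k=1..n. mu k) \<cdot>\<^sub>v (toda_L x p lam (Suc n) *\<^sub>v V n)"
      unfolding IH by (rule mult_mat_vec[OF toda_L_carrier V])
    also have "toda_L x p lam (Suc n) *\<^sub>v V n = mu (Suc n) \<cdot>\<^sub>v V (Suc n)"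
      using Suc.prems(2)[of "Suc n"] False by simp
    also have "(\<Prod>k=1..n. mu k) \<cdot>\<^sub>v (mu (Suc n) \<cdot>\<^sub>v V (Suc n)) = (\<Prod>k=1..Suc n. mu k) \<cdot>\<^sub>v V (Suc n)"
      by (simp add: smult_smult_assoc mult.commute)
    finally show ?thesis .
  qed
qed

theorem theorem3:
  fixes N :: nat and lam :: complex and x p xt :: "nat \<Rightarrow> complex"
  assumes "N \<ge> 2" and "lam \<noteq> 0"
  shows
    "((\<forall>k\<in>{1..N}. p k = (exp (xt k - x k) - 1) / lam
          + lam * exp (x k - (if k = 1 then xt N else xt (k - 1))))
       \<longrightarrow> eigenvalue (toda_T x p lam N) (\<Prod>k=1..N. exp (xt k - x k)))
     \<and>
     ((p 1 = (exp (xt 1 - x 1) - 1) / lam \<and>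
       (\<forall>k\<in>{2..N}. p k = (exp (xt k - x k) - 1) / lam + lam * exp (x k - xt (k - 1))))
       \<longrightarrow> (\<Prod>k=1..N. exp (xt k - x k)) = toda_T x p lam N $$ (0, 0))"
proof -
  define V where "V k = vec 2 (\<lambda>i. if i = 0 then 1 else exp (- xt k))" for k
  define mu where "mu k = exp (xt k - x k)" for k
  have VC: "V k \<in> carrier_vec 2" for k by (simp add: V_def)
  have step: "toda_L x p lam k *\<^sub>v V j = mu k \<cdot>\<^sub>v V k"
    if h: "p k = (exp (xt k - x k) - 1) / lam + lam * exp (x k - xt j)" for k j
  proof -
    have a: "(1 + lam * p k) - lam\<^sup>2 * exp (x k) * exp (- xt j) = exp (xt k - x k)"
      using h assms(2) by (simp add: field_simps power2_eq_square exp_diff exp_minus)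
    have b: "exp (- x k) = exp (xt k - x k) * exp (- xt k)"
      by (simp add: exp_diff exp_minus field_simps)
    show ?thesis unfolding V_def toda_L_mult mu_def
      by (rule eq_vecI) (auto simp: a b)
  qed
  have P1: "eigenvalue (toda_T x p lam N) (\<Prod>k=1..N. exp (xt k - x k))"
    if H: "\<forall>k\<in>{1..N}. p k = (exp (xt k - x k) - 1) / lam
          + lam * exp (x k - (if k = 1 then xt N else xt (k - 1)))"
  proof -
    have "toda_T x p lam N *\<^sub>v V N = (\<Prod>k=1..N. mu k) \<cdot>\<^sub>v V N"
    proof (rule toda_T_chain[OF VC VC])
      show "toda_L x p lam 1 *\<^sub>v V N = mu 1 \<cdot>\<^sub>v V 1"
        using H assms(1) by (intro step) auto
      show "toda_L x p lam k *\<^sub>v V (k - 1) = mu k \<cdot>\<^sub>v V k" if "2 \<le> k" "k \<le> N" for k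
        using H that by (intro step) auto
      show "1 \<le> N" using assms(1) by simp
    qed
    moreover have "V N \<noteq> 0\<^sub>v 2"
    proof
      assume "V N = 0\<^sub>v 2"
      then have "V N $ 0 = 0\<^sub>v 2 $ 0" by simp
      then show False by (simp add: V_def)
    qed
    ultimately show ?thesis
      unfolding eigenvalue_def eigenvector_def mu_def
      using VC toda_T_carrier[of x p lam N] by (intro exI[of _ "V N"]) auto
  qed
  have P2: "(\<Prod>k=1..N. exp (xt k - x k)) = toda_T x p lam N $$ (0, 0)"
    if H1: "p 1 = (exp (xt 1 - x 1) - 1) / lam"
      and H: "\<forall>k\<in>{2..N}. p k = (exp (xt k - x k) - 1) / lam + lam * exp (x k - xt (k - 1))"
  proof -
    define w :: "complex vec" where "w = vec 2 (\<lambda>i. if i = 0 then 1 else 0)"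
    have wC: "w \<in> carrier_vec 2" by (simp add: w_def)
    have "toda_T x p lam N *\<^sub>v w = (\<Prod>k=1..N. mu k) \<cdot>\<^sub>v V N"
    proof (rule toda_T_chain[OF wC VC])
      have a: "1 + lam * p 1 = exp (xt 1 - x 1)"
        using H1 assms(2) by (simp add: field_simps)
      have b: "exp (- x 1) = exp (xt 1 - x 1) * exp (- xt 1)"
        by (simp add: exp_diff exp_minus field_simps)
      show "toda_L x p lam 1 *\<^sub>v w = mu 1 \<cdot>\<^sub>v V 1"
        unfolding w_def V_def toda_L_mult mu_def
        by (rule eq_vecI) (auto simp: a[simplified] b[simplified])
      show "toda_L x p lam k *\<^sub>v V (k - 1) = mu k \<cdot>\<^sub>v V k" if "2 \<le> k" "k \<le> N" for k
        using H that by (intro step) auto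
      show "1 \<le> N" using assms(1) by simp
    qed
    then have "(toda_T x p lam N *\<^sub>v w) $ 0 = ((\<Prod>k=1..N. mu k) \<cdot>\<^sub>v V N) $ 0" by simp
    moreover have "(toda_T x p lam N *\<^sub>v w) $ 0 = toda_T x p lam N $$ (0, 0)"
      using toda_T_carrier[of x p lam N]
      by (simp add: w_def mult_mat_vec_def scalar_prod_def row_def numeral_2_eq_2)
    ultimately show ?thesis by (simp add: V_def mu_def)
  qed
  show ?thesis using P1 P2 by blast
qed

end
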